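(* There exists an absolute constant $C_1<1$ such that the following holds. Let $p$ be a prime, let $n\geq 2$ with $p>2n$, and let $A=\{v_1,\dots,v_n\}$ be a set of $n$ distinct elements of $\mathbb{Z}_p$ which is symmetric, i.e. $-v\in A$ whenever $v\in A$. Let $Y_1,Y_2,Y_3$ be independent random variables, each uniformly distributed on $A$, and set $Y=Y_1+Y_2+Y_3$ (sum in $\mathbb{Z}_p$). Then $$\max_{x\in \mathbb{Z}_p} \mathbb{P}[Y=x]\leq\frac{C_1}{n}.$$
   Context: $\mathbb{Z}_p$ denotes the cyclic group of integers modulo the prime $p$. *)

theory Defs
  imports "HOL-Probability.Probability_Mass_Function"
begin

text \<open>Z_p is modelled by the residues {0..<p} :: int set with addition mod p.
  The law of Y = Y1 + Y2 + Y3 for independent uniform Y_i on A.\<close>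

definition sum3_dist :: "int \<Rightarrow> int set \<Rightarrow> int pmf" where
  "sum3_dist p A =
     bind_pmf (pmf_of_set A) (\<lambda>y1.
     bind_pmf (pmf_of_set A) (\<lambda>y2.
     bind_pmf (pmf_of_set A) (\<lambda>y3.
     return_pmf ((y1 + y2 + y3) mod p))))"

end

theory Submission
  imports Defs "HOL-Computational_Algebra.Primes"
begin


lemma shift_closed:
  fixes p t a0 :: int
  assumes p: "prime p" and A: "A \<subseteq> {0..<p}" and a0: "a0 \<in> A" and t: "t mod p \<noteq> 0"
    and cl: "\<forall>a\<in>A. (a + t) mod p \<in> A"
  shows "A = {0..<p}"
proof
  show "A \<subseteq> {0..<p}" by fact
  have pp: "p > 1" using p prime_gt_1_int by blast
  have step: "(a0 + int j * t) mod p \<in> A" for j :: nat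
  proof (induction j)
    case 0 then show ?case using a0 A pp by auto
  next
    case (Suc j)
    have "(a0 + int (Suc j) * t) mod p = ((a0 + int j * t) mod p + t) mod p"
      by (simp add: mod_add_left_eq algebra_simps)
      (metis add.assoc add.commute mod_add_right_eq)
    then show ?case using cl Suc by simp
  qed
  have "coprime p t" using p t by (simp add: prime_imp_coprime_int dvd_eq_mod_eq_0)
  then have "coprime t p" by (simp add: coprime_commute)
  then obtain u v where uv: "u * t + v * p = 1"
    by (metis bezout_int gcd_eq_1_imp_coprime coprime_iff_gcd_eq_1)
  show "{0..<p} \<subseteq> A"
  proof
    fix y assume y: "y \<in> {0..<p}"
    define j where "j = nat (((y - a0) * u) mod p)"
    have j: "int j = ((y - a0) * u) mod p" using pp j_def by simp
    have "(a0 + int j * t) mod p = (a0 + ((y - a0) * u) * t) mod p"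
      unfolding j by (metis mod_add_right_eq mod_mult_left_eq)
    also have "((y - a0) * u) * t = (y - a0) * (1 - v * p)"
    proof -
      have "u * t = 1 - v * p" using uv by linarith
      then show ?thesis by (simp add: mult.assoc)
    qed
    also have "(a0 + (y - a0) * (1 - v * p)) mod p = y mod p"
    proof -
      have "a0 + (y - a0) * (1 - v * p) = y + p * ((a0 - y) * v)" by (simp add: algebra_simps)
      then show ?thesis by simp
    qed
    also have "\<dots> = y" using y by simp
    finally show "y \<in> A" using step[of j] by simp
  qed
qed

lemma mod_inj: fixes p x y :: int
  shows "x \<in> {0..<p} \<Longrightarrow> y \<in> {0..<p} \<Longrightarrow> x mod p = y mod p \<Longrightarrow> x = y"
  by simp

definition ss :: "int \<Rightarrow> int set \<Rightarrow> int set \<Rightarrow> int set" where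
  "ss p A B = (\<lambda>(a,b). (a+b) mod p) ` (A \<times> B)"

lemma ss_sub: "p > 0 \<Longrightarrow> ss p A B \<subseteq> {0..<p}"
  unfolding ss_def by auto

lemma ss_card_le: "p > 0 \<Longrightarrow> card (ss p A B) \<le> nat p"
  by (metis card_atLeastLessThan_int card_mono finite_atLeastLessThan_int ss_sub diff_zero)

lemma ss_mono: "A \<subseteq> A2 \<Longrightarrow> B \<subseteq> B2 \<Longrightarrow> ss p A B \<subseteq> ss p A2 B2"
  unfolding ss_def by auto

lemma cd:
  fixes p :: int
  assumes p: "prime p"
  shows "A \<subseteq> {0..<p} \<Longrightarrow> B \<subseteq> {0..<p} \<Longrightarrow> A \<noteq> {} \<Longrightarrow> B \<noteq> {} \<Longrightarrow>
     card (ss p A B) = nat p \<or> card A + card B \<le> card (ss p A B) + 1"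
proof (induction "card B" arbitrary: A B rule: less_induct)
  case less
  have pp: "p > 1" using p prime_gt_1_int by blast
  have fA: "finite A" using finite_subset[OF less.prems(1)] by simp
  have fB: "finite B" using finite_subset[OF less.prems(2)] by simp
  have fss: "finite (ss p A B)" using finite_subset[OF ss_sub[of p A B]] pp by simp
  show ?case
  proof (cases "card B = 1")
    case True
    then obtain b where Bb: "B = {b}" by (meson card_1_singletonE)
    have "ss p A B = (\<lambda>a. (a + b) mod p) ` A" unfolding ss_def Bb by auto
    moreover have "inj_on (\<lambda>a. (a + b) mod p) A"
    proof
      fix x y assume "x \<in> A" "y \<in> A" "(x + b) mod p = (y + b) mod p"
      then have "x mod p = y mod p" by (metis add_diff_cancel_right' mod_diff_left_eq)
      then show "x = y" using \<open>x \<in> A\<close> \<open>y \<in> A\<close> less.prems(1) mod_inj by blast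
    qed
    ultimately have "card (ss p A B) = card A" by (simp add: card_image)
    then show ?thesis using True by simp
  next
    case False
    have "card B \<noteq> 0" using fB less.prems(4) by simp
    with False have c2: "card B \<ge> 2" by linarith
    show ?thesis
    proof (cases "ss p A B = {0..<p}")
      case True then show ?thesis by simp
    next
      case notfull: False
      obtain b1 b2 where b12: "b1 \<in> B" "b2 \<in> B" "b1 \<noteq> b2"
        using c2 by (metis card_le_Suc0_iff_eq not_less_eq_eq numeral_2_eq_2 fB)
      have "\<exists>e. (\<exists>b\<in>B. (b+e) mod p \<in> A) \<and> (\<exists>b\<in>B. (b+e) mod p \<notin> A)"
      proof (rule ccontr)
        assume H: "\<not> ?thesis"
        have cl: "\<forall>a\<in>A. (a + (b2 - b1)) mod p \<in> A"
        proof
          fix a assume a: "a \<in> A"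
          have "(b1 + (a - b1)) mod p \<in> A" using a less.prems(1) by auto
          then have "(b2 + (a - b1)) mod p \<in> A" using H b12 by blast
          then show "(a + (b2 - b1)) mod p \<in> A" by (simp add: algebra_simps)
        qed
        have "(b2 - b1) mod p \<noteq> 0"
        proof
          assume "(b2 - b1) mod p = 0"
          then have "b2 mod p = b1 mod p" by (simp add: mod_eq_dvd_iff dvd_eq_mod_eq_0)
          then show False using b12 less.prems(2) mod_inj by blast
        qed
        then have "A = {0..<p}" using shift_closed[OF p less.prems(1) _ _ cl] less.prems(3) by blast
        then have "ss p A B = {0..<p}"
        proof -
          assume A: "A = {0..<p}"
          have "{0..<p} \<subseteq> ss p A B"
          proof
            fix y assume y: "y \<in> {0..<p}"
            have "((y - b1) mod p, b1) \<in> A \<times> B" using A b12 pp by auto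
            moreover have "y = ((y - b1) mod p + b1) mod p" using y by (simp add: mod_add_left_eq)
            ultimately show "y \<in> ss p A B" unfolding ss_def by force
          qed
          moreover have "ss p A B \<subseteq> {0..<p}" using ss_sub[of p A B] pp by simp
          ultimately show ?thesis by (rule subset_antisym[rotated])
        qed
        then show False using notfull by blast
      qed
      then obtain e where e1: "\<exists>b\<in>B. (b+e) mod p \<in> A" and e2: "\<exists>b\<in>B. (b+e) mod p \<notin> A" by blast
      define B' where "B' = {b\<in>B. (b+e) mod p \<in> A}"
      define A' where "A' = A \<union> (\<lambda>b. (b+e) mod p) ` (B - B')"
      have B'sub: "B' \<subset> B" using e2 unfolding B'_def by blast
      have cB': "card B' < card B" using B'sub fB by (simp add: psubset_card_mono)
      have B'ne: "B' \<noteq> {}" using e1 unfolding B'_def by blast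
      have B'p: "B' \<subseteq> {0..<p}" using B'sub less.prems(2) by blast
      have A'p: "A' \<subseteq> {0..<p}" using less.prems(1) pp unfolding A'_def by auto
      have A'ne: "A' \<noteq> {}" using less.prems(3) unfolding A'_def by blast
      have inj: "inj_on (\<lambda>b. (b+e) mod p) (B - B')"
      proof
        fix x y assume "x \<in> B - B'" "y \<in> B - B'" "(x + e) mod p = (y + e) mod p"
        then have "x mod p = y mod p" by (metis add_diff_cancel_right' mod_diff_left_eq)
        then show "x = y" using \<open>x \<in> B - B'\<close> \<open>y \<in> B - B'\<close> less.prems(2) mod_inj by blast
      qed
      have disj: "A \<inter> (\<lambda>b. (b+e) mod p) ` (B - B') = {}" unfolding B'_def by auto
      have cA': "card A' = card A + card (B - B')"
        unfolding A'_def using card_Un_disjoint[OF fA _ disj] fB card_image[OF inj] by simp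
      have cB: "card B = card B' + card (B - B')"
        using B'sub fB by (metis card_Diff_subset finite_subset le_add_diff_inverse psubset_imp_subset card_mono)
      have sub: "ss p A' B' \<subseteq> ss p A B"
      proof
        fix y assume "y \<in> ss p A' B'"
        then obtain a b where ab: "a \<in> A'" "b \<in> B'" "y = (a + b) mod p" unfolding ss_def by auto
        show "y \<in> ss p A B"
        proof (cases "a \<in> A")
          case True then show ?thesis using ab B'sub unfolding ss_def by force
        next
          case False
          then obtain b0 where b0: "b0 \<in> B" "a = (b0 + e) mod p" using ab unfolding A'_def by auto
          have "(b + e) mod p \<in> A" using ab unfolding B'_def by auto
          moreover have "y = ((b + e) mod p + b0) mod p" using ab b0
            by (simp add: mod_add_left_eq mod_add_right_eq algebra_simps)
          ultimately show ?thesis using b0 unfolding ss_def by force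
        qed
      qed
      have IH: "card (ss p A' B') = nat p \<or> card A' + card B' \<le> card (ss p A' B') + 1"
        using less.hyps[OF cB' A'p B'p A'ne B'ne] .
      have cle: "card (ss p A' B') \<le> card (ss p A B)" using sub fss card_mono by blast
      show ?thesis
      proof (cases "card (ss p A' B') = nat p")
        case True then show ?thesis using cle ss_card_le[of p A B] pp by simp
      next
        case False then show ?thesis using IH cle cA' cB by simp
      qed
    qed
  qed
qed


definition cc :: "int \<Rightarrow> int set \<Rightarrow> int \<Rightarrow> nat" where
  "cc p A t = card {a\<in>A. (a + t) mod p \<in> A}"
definition dd :: "int \<Rightarrow> int set \<Rightarrow> int \<Rightarrow> nat" where
  "dd p A t = card {a\<in>A. (a + t) mod p \<notin> A}"

lemma cc_dd: "finite A \<Longrightarrow> cc p A t + dd p A t = card A"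
proof -
  assume f: "finite A"
  have "A = {a\<in>A. (a + t) mod p \<in> A} \<union> {a\<in>A. (a + t) mod p \<notin> A}" by blast
  moreover have "card ({a\<in>A. (a + t) mod p \<in> A} \<union> {a\<in>A. (a + t) mod p \<notin> A})
     = card {a\<in>A. (a + t) mod p \<in> A} + card {a\<in>A. (a + t) mod p \<notin> A}"
    by (rule card_Un_disjoint) (use f in auto)
  ultimately show ?thesis unfolding cc_def dd_def by simp
qed

lemma cc_mod: "cc p A (t mod p) = cc p A t"
  unfolding cc_def by (simp add: mod_add_right_eq)
lemma dd_mod: "dd p A (t mod p) = dd p A t"
  unfolding dd_def by (simp add: mod_add_right_eq)

lemma mod_self_in: fixes p a :: int shows "A \<subseteq> {0..<p} \<Longrightarrow> a \<in> A \<Longrightarrow> a mod p = a"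
  by (meson atLeastLessThan_iff mod_pos_pos_trivial subsetD)

lemma dd_zero: "A \<subseteq> {0..<p} \<Longrightarrow> dd p A 0 = 0"
proof -
  assume A: "A \<subseteq> {0..<p}"
  have "{a\<in>A. (a + 0) mod p \<notin> A} = {}" using mod_self_in[OF A] by auto
  then show ?thesis unfolding dd_def by (metis card.empty)
qed



lemma dd_subadd:
  fixes p s t :: int
  assumes fA: "finite A" and Ap: "A \<subseteq> {0..<p}"
  shows "dd p A (s + t) \<le> dd p A s + dd p A t"
proof -
  let ?X = "{a\<in>A. (a + (s + t)) mod p \<notin> A}"
  let ?X1 = "{a\<in>A. (a + s) mod p \<notin> A}"
  let ?X2 = "{a\<in>A. (a + s) mod p \<in> A \<and> (a + (s + t)) mod p \<notin> A}"
  let ?Y = "{a\<in>A. (a + t) mod p \<notin> A}"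
  have "?X \<subseteq> ?X1 \<union> ?X2" by blast
  then have "card ?X \<le> card (?X1 \<union> ?X2)" using fA by (intro card_mono) auto
  also have "\<dots> \<le> card ?X1 + card ?X2" by (rule card_Un_le)
  also have "card ?X2 \<le> card ?Y"
  proof (rule card_inj_on_le)
    show "inj_on (\<lambda>a. (a + s) mod p) ?X2"
    proof
      fix x y assume x: "x \<in> ?X2" and y: "y \<in> ?X2" and e: "(x + s) mod p = (y + s) mod p"
      then have "x mod p = y mod p" by (metis add_diff_cancel_right' mod_diff_left_eq)
      moreover have "x \<in> {0..<p}" "y \<in> {0..<p}" using x y Ap by auto
      ultimately show "x = y" using mod_inj by blast
    qed
    show "(\<lambda>a. (a + s) mod p) ` ?X2 \<subseteq> ?Y"
    proof
      fix y assume "y \<in> (\<lambda>a. (a + s) mod p) ` ?X2"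
      then obtain a where a: "a \<in> ?X2" "y = (a + s) mod p" by blast
      have "(y + t) mod p = (a + (s + t)) mod p" using a(2) by (simp add: mod_add_left_eq add.assoc)
      then show "y \<in> ?Y" using a by auto
    qed
    show "finite ?Y" using fA by simp
  qed
  finally show ?thesis unfolding dd_def by simp
qed



lemma cc_sum:
  fixes p :: int
  assumes Ap: "A \<subseteq> {0..<p}" and pp: "p > 0"
  shows "(\<Sum>t\<in>{0..<p}. cc p A t) = card A * card A"
proof -
  have fA: "finite A" using finite_subset[OF Ap] by simp
  have "cc p A t = (\<Sum>a\<in>A. if (a+t) mod p \<in> A then 1 else 0)" for t
    unfolding cc_def using sum.inter_filter[OF fA, of "\<lambda>_. 1::nat"] by simp
  then have "(\<Sum>t\<in>{0..<p}. cc p A t) = (\<Sum>t\<in>{0..<p}. \<Sum>a\<in>A. if (a+t) mod p \<in> A then 1 else 0)"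
    by simp
  also have "\<dots> = (\<Sum>a\<in>A. \<Sum>t\<in>{0..<p}. if (a+t) mod p \<in> A then 1 else 0)"
    by (rule sum.swap)
  also have "\<dots> = (\<Sum>a\<in>A. card A)"
  proof (rule sum.cong[OF refl])
    fix a assume a: "a \<in> A"
    have "(\<Sum>t\<in>{0..<p}. if (a+t) mod p \<in> A then 1 else (0::nat)) = card {t\<in>{0..<p}. (a+t) mod p \<in> A}"
      using sum.inter_filter[of "{0..<p}" "\<lambda>_. 1::nat"] by simp
    also have "\<dots> = card A"
    proof (rule bij_betw_same_card[of "\<lambda>t. (a+t) mod p"], rule bij_betw_byWitness[where f'="\<lambda>b. (b - a) mod p"])
      show "\<forall>t\<in>{t \<in> {0..<p}. (a + t) mod p \<in> A}. ((a + t) mod p - a) mod p = t"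
        by (simp add: mod_diff_left_eq)
      show "\<forall>b\<in>A. (a + (b - a) mod p) mod p = b"
        using mod_self_in[OF Ap] by (simp add: mod_add_right_eq)
      show "(\<lambda>t. (a + t) mod p) ` {t \<in> {0..<p}. (a + t) mod p \<in> A} \<subseteq> A" by auto
      show "(\<lambda>b. (b - a) mod p) ` A \<subseteq> {t \<in> {0..<p}. (a + t) mod p \<in> A}"
        using mod_self_in[OF Ap] pp by (auto simp: mod_add_right_eq)
    qed
    finally show "(\<Sum>t\<in>{0..<p}. if (a+t) mod p \<in> A then 1 else (0::nat)) = card A" .
  qed
  also have "\<dots> = card A * card A" by simp
  finally show ?thesis .
qed

lemma markov:
  fixes p :: int
  assumes Ap: "A \<subseteq> {0..<p}" and pp: "p > 0"
  shows "card {t\<in>{0..<p}. dd p A t \<le> j} * (card A - j) \<le> card A * card A"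
proof -
  have fA: "finite A" using finite_subset[OF Ap] by simp
  let ?S = "{t\<in>{0..<p}. dd p A t \<le> j}"
  have "card ?S * (card A - j) \<le> (\<Sum>t\<in>?S. cc p A t)"
  proof -
    have "card A - j \<le> cc p A t" if "t \<in> ?S" for t using that cc_dd[OF fA, of p t] by auto
    then show ?thesis using sum_bounded_below[of ?S "card A - j" "cc p A"] by simp
  qed
  also have "\<dots> \<le> (\<Sum>t\<in>{0..<p}. cc p A t)" by (rule sum_mono2) auto
  also have "\<dots> = card A * card A" by (rule cc_sum[OF Ap pp])
  finally show ?thesis .
qed



lemma S_bound:
  fixes p :: int
  assumes p: "prime p" and Ap: "A \<subseteq> {0..<p}"
    and big: "card A * card A < nat p * (card A - 2 * k)"
  shows "2 * card {t\<in>{0..<p}. dd p A t \<le> k} * (card A - 2 * k) \<le> card A * card A + (card A - 2 * k)"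
proof -
  have pp: "p > 1" using p prime_gt_1_int by blast
  have fA: "finite A" using finite_subset[OF Ap] by simp
  define S where "S = {t\<in>{0..<p}. dd p A t \<le> k}"
  define S2 where "S2 = {t\<in>{0..<p}. dd p A t \<le> 2 * k}"
  have S0: "0 \<in> S" unfolding S_def using dd_zero[OF Ap] pp by simp
  have Sp: "S \<subseteq> {0..<p}" unfolding S_def by auto
  have sub: "ss p S S \<subseteq> S2"
  proof
    fix y assume "y \<in> ss p S S"
    then obtain s t where st: "s \<in> S" "t \<in> S" "y = (s + t) mod p" unfolding ss_def by auto
    have "dd p A y = dd p A (s + t)" using st(3) dd_mod by simp
    also have "\<dots> \<le> dd p A s + dd p A t" by (rule dd_subadd[OF fA Ap])
    also have "\<dots> \<le> 2 * k" using st unfolding S_def by simp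
    finally show "y \<in> S2" unfolding S2_def using st(3) pp by simp
  qed
  have fS2: "finite S2" unfolding S2_def by (rule finite_subset[of _ "{0..<p}"]) auto
  have c1: "card (ss p S S) \<le> card S2" using card_mono[OF fS2 sub] .
  have m: "card S2 * (card A - 2 * k) \<le> card A * card A"
    unfolding S2_def by (rule markov[OF Ap]) (use pp in simp)
  have "card S2 * (card A - 2 * k) < nat p * (card A - 2 * k)" using m big by linarith
  then have "card S2 < nat p" by (meson mult_less_cancel2)
  then have "card (ss p S S) \<noteq> nat p" using c1 by linarith
  then have "card S + card S \<le> card (ss p S S) + 1"
    using cd[OF p Sp Sp] S0 by blast
  then have "2 * card S \<le> card S2 + 1" using c1 by linarith
  then have "2 * card S * (card A - 2 * k) \<le> (card S2 + 1) * (card A - 2 * k)"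
    by (rule mult_right_mono) simp
  also have "\<dots> = card S2 * (card A - 2 * k) + (card A - 2 * k)" by (simp only: add_mult_distrib mult_1)
  also have "\<dots> \<le> card A * card A + (card A - 2 * k)" using m by linarith
  finally show ?thesis unfolding S_def .
qed



lemma inner:
  fixes p x y1 y2 :: int
  assumes Ap: "A \<subseteq> {0..<p}" and x: "x \<in> {0..<p}"
    and sym: "\<forall>v\<in>A. (- v) mod p \<in> A"
  shows "(\<Sum>y3\<in>A. indicator {x} ((y1+y2+y3) mod p) :: real) = (if (y1 + y2 - x) mod p \<in> A then 1 else 0)"
proof -
  have fA: "finite A" using finite_subset[OF Ap] by simp
  have "(\<Sum>y3\<in>A. indicator {x} ((y1+y2+y3) mod p) :: real) = (\<Sum>y3\<in>A. if (y1+y2+y3) mod p = x then 1 else 0)"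
    by (intro sum.cong) (auto simp: indicator_def)
  also have "\<dots> = real (card {y3\<in>A. (y1+y2+y3) mod p = x})"
    using sum.inter_filter[OF fA, of "\<lambda>_. 1::real"] by simp
  also have "{y3\<in>A. (y1+y2+y3) mod p = x} = (if (x - y1 - y2) mod p \<in> A then {(x - y1 - y2) mod p} else {})"
  proof -
    have "y3 \<in> A \<Longrightarrow> (y1+y2+y3) mod p = x \<longleftrightarrow> y3 = (x - y1 - y2) mod p" for y3
    proof -
      assume y3: "y3 \<in> A"
      have y3m: "y3 mod p = y3" using mod_self_in[OF Ap y3] .
      have xm: "x mod p = x" using x by simp
      show ?thesis
      proof
        assume "(y1+y2+y3) mod p = x"
        then have "(y1+y2+y3 - y1 - y2) mod p = (x - y1 - y2) mod p"
          by (metis mod_diff_left_eq)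
        then show "y3 = (x - y1 - y2) mod p" using y3m by simp
      next
        assume "y3 = (x - y1 - y2) mod p"
        then have "(y1+y2+y3) mod p = (y1 + y2 + (x - y1 - y2)) mod p" by (simp add: mod_add_right_eq)
        then show "(y1+y2+y3) mod p = x" using xm by simp
      qed
    qed
    then show ?thesis by auto
  qed
  also have "(x - y1 - y2) mod p \<in> A \<longleftrightarrow> (y1 + y2 - x) mod p \<in> A"
  proof
    assume "(x - y1 - y2) mod p \<in> A"
    then have "(- ((x - y1 - y2) mod p)) mod p \<in> A" using sym by blast
    moreover have "(- ((x - y1 - y2) mod p)) mod p = (- (x - y1 - y2)) mod p" by (rule mod_minus_eq)
    moreover have "- (x - y1 - y2) = y1 + y2 - x" by simp
    ultimately show "(y1 + y2 - x) mod p \<in> A" by metis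
  next
    assume "(y1 + y2 - x) mod p \<in> A"
    then have "(- ((y1 + y2 - x) mod p)) mod p \<in> A" using sym by blast
    moreover have "(- ((y1 + y2 - x) mod p)) mod p = (- (y1 + y2 - x)) mod p" by (rule mod_minus_eq)
    moreover have "- (y1 + y2 - x) = x - y1 - y2" by simp
    ultimately show "(x - y1 - y2) mod p \<in> A" by metis
  qed
  finally show ?thesis by simp
qed

lemma pmf_formula:
  fixes p x :: int
  assumes Ap: "A \<subseteq> {0..<p}" and ne: "A \<noteq> {}" and x: "x \<in> {0..<p}"
    and sym: "\<forall>v\<in>A. (- v) mod p \<in> A"
  shows "pmf (sum3_dist p A) x = real (\<Sum>b\<in>A. cc p A ((b - x) mod p)) / real (card A) ^ 3"
proof -
  have fA: "finite A" using finite_subset[OF Ap] by simp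
  have "pmf (sum3_dist p A) x = (\<Sum>y1\<in>A. \<Sum>y2\<in>A. \<Sum>y3\<in>A. indicator {x} ((y1+y2+y3) mod p)) / (real (card A) * (real (card A) * real (card A)))"
    unfolding sum3_dist_def by (simp add: pmf_bind integral_pmf_of_set fA ne pmf_return)
  also have "\<dots> = (\<Sum>y1\<in>A. (\<Sum>y2\<in>A. (if (y1 + y2 - x) mod p \<in> A then 1 else 0))) / real (card A) ^ 3"
    by (simp add: inner[OF Ap x sym] power3_eq_cube)
  also have "(\<Sum>y1\<in>A. (\<Sum>y2\<in>A. (if (y1 + y2 - x) mod p \<in> A then 1 else 0))) = (\<Sum>y2\<in>A. (\<Sum>y1\<in>A. (if (y1 + y2 - x) mod p \<in> A then 1 else (0::real))))"
    by (rule sum.swap)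
  also have "\<dots> = (\<Sum>y2\<in>A. real (cc p A ((y2 - x) mod p)))"
  proof (rule sum.cong[OF refl])
    fix y2 assume "y2 \<in> A"
    have "(\<Sum>y1\<in>A. (if (y1 + y2 - x) mod p \<in> A then 1 else (0::real))) = real (card {y1\<in>A. (y1 + (y2 - x)) mod p \<in> A})"
      using sum.inter_filter[OF fA, of "\<lambda>_. 1::real"] by (simp add: algebra_simps)
    also have "\<dots> = real (cc p A ((y2 - x) mod p))" using cc_mod unfolding cc_def by simp
    finally show "(\<Sum>y1\<in>A. (if (y1 + y2 - x) mod p \<in> A then 1 else (0::real))) = real (cc p A ((y2 - x) mod p))" .
  qed
  finally show ?thesis by simp
qed



lemma count_bound:
  fixes p x :: int
  assumes Ap: "A \<subseteq> {0..<p}" and pp: "p > 0" and kn: "k + 1 \<le> card A"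
  shows "(\<Sum>b\<in>A. cc p A ((b - x) mod p)) \<le> card A * (card A - (k+1)) + (k+1) * card {t\<in>{0..<p}. dd p A t \<le> k}"
proof -
  have fA: "finite A" using finite_subset[OF Ap] by simp
  define S where "S = {t\<in>{0..<p}. dd p A t \<le> k}"
  define T where "T = (\<lambda>b. (b - x) mod p) ` A"
  have inj: "inj_on (\<lambda>b. (b - x) mod p) A"
  proof
    fix a b assume ab: "a \<in> A" "b \<in> A" "(a - x) mod p = (b - x) mod p"
    then have "a mod p = b mod p" by (metis diff_add_cancel mod_add_left_eq)
    moreover have "a \<in> {0..<p}" "b \<in> {0..<p}" using ab Ap by auto
    ultimately show "a = b" using mod_inj by blast
  qed
  have cT: "card T = card A" unfolding T_def using card_image[OF inj] .
  have fT: "finite T" unfolding T_def using fA by simp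
  have "(\<Sum>b\<in>A. cc p A ((b - x) mod p)) = (\<Sum>t\<in>T. cc p A t)"
    unfolding T_def using sum.reindex[OF inj, of "cc p A"] by simp
  also have "\<dots> \<le> (\<Sum>t\<in>T. (card A - (k+1)) + (if t \<in> S then k+1 else 0))"
  proof (rule sum_mono)
    fix t assume "t \<in> T"
    then have t: "t \<in> {0..<p}" unfolding T_def using pp by auto
    have e: "cc p A t + dd p A t = card A" using cc_dd[OF fA] .
    show "cc p A t \<le> (card A - (k+1)) + (if t \<in> S then k+1 else 0)"
    proof (cases "t \<in> S")
      case True then show ?thesis using e kn by simp
    next
      case False then have "dd p A t > k" unfolding S_def using t by auto
      then show ?thesis using e False by simp
    qed
  qed
  also have "\<dots> = card T * (card A - (k+1)) + (k+1) * card {t\<in>T. t \<in> S}"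
    by (simp add: sum.distrib sum.inter_filter[OF fT, symmetric])
  finally have 1: "(\<Sum>b\<in>A. cc p A ((b - x) mod p)) \<le> card T * (card A - (k+1)) + (k+1) * card {t\<in>T. t \<in> S}" .
  have "card {t\<in>T. t \<in> S} \<le> card S"
  proof (rule card_mono)
    show "finite S" unfolding S_def by (rule finite_subset[of _ "{0..<p}"]) auto
  qed auto
  then have "(k+1) * card {t\<in>T. t \<in> S} \<le> (k+1) * card S" by (rule mult_left_mono) simp
  then show ?thesis using 1 unfolding S_def cT by linarith
qed

lemma final_arith:
  fixes N K s cnt :: real
  assumes c: "cnt \<le> N * (N - (K + 1)) + (K + 1) * s"
    and sb: "2 * s * (N - 2 * K) \<le> N * N + (N - 2 * K)"
    and k1: "16 * K \<le> N" and k2: "N < 16 * K + 16" and N2: "N \<ge> 2" and K0: "K \<ge> 0"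
  shows "cnt \<le> 127 / 128 * (N * N)"
proof -
  have d: "N - 2 * K \<ge> 7 * N / 8" using k1 by simp
  have dpos: "N - 2 * K > 0" using d N2 by simp
  have "2 * s - 1 \<le> 8 * N / 7"
  proof (rule ccontr)
    assume "\<not> ?thesis"
    then have h: "2 * s - 1 > 8 * N / 7" by simp
    have "(2 * s - 1) * (N - 2 * K) > (8 * N / 7) * (N - 2 * K)"
      using mult_strict_right_mono[OF h dpos] .
    moreover have "(8 * N / 7) * (N - 2 * K) \<ge> (8 * N / 7) * (7 * N / 8)"
      using mult_left_mono[OF d, of "8 * N / 7"] N2 by simp
    ultimately have "(2 * s - 1) * (N - 2 * K) > N * N" by simp
    then show False using sb by (simp add: algebra_simps)
  qed
  then have s: "s \<le> 4 * N / 7 + 1 / 2" by simp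
  have a: "K + 1 \<ge> N / 16" using k2 by simp
  have b: "3 * N / 7 - 1 / 2 \<ge> 5 * N / 28" using N2 by simp
  have "(K + 1) * (N - s) \<ge> (K + 1) * (3 * N / 7 - 1 / 2)"
    using s K0 by (intro mult_left_mono) auto
  moreover have "(K + 1) * (3 * N / 7 - 1 / 2) \<ge> (N / 16) * (5 * N / 28)"
    using a b N2 by (intro mult_mono) auto
  ultimately have "(K + 1) * (N - s) \<ge> (N / 16) * (5 * N / 28)" by linarith
  then have "cnt \<le> N * N - (N / 16) * (5 * N / 28)" using c by (simp add: algebra_simps)
  also have "\<dots> \<le> 127 / 128 * (N * N)" using N2 by (simp add: algebra_simps)
  finally show ?thesis .
qed



lemma main:
  fixes p x :: int and n :: nat
  assumes p: "prime p" and n2: "n \<ge> 2" and pn: "p > 2 * int n" and Ap: "A \<subseteq> {0..<p}"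
    and cA: "card A = n" and sym: "\<forall>v\<in>A. (- v) mod p \<in> A" and x: "x \<in> {0..<p}"
  shows "pmf (sum3_dist p A) x \<le> (127 / 128) / real n"
proof -
  have pp: "p > 1" using p prime_gt_1_int by blast
  have ne: "A \<noteq> {}" using cA n2 by auto
  define k where "k = n div 16"
  have k16: "16 * k \<le> n" unfolding k_def by simp
  have k16b: "n < 16 * k + 16" unfolding k_def by simp
  have kn: "k + 1 \<le> card A" using k16 n2 cA by simp
  have h1: "7 * n \<le> 8 * (n - 2 * k)" using k16 by simp
  have h2: "2 * n + 1 \<le> nat p" using pn by simp
  have "(2 * n + 1) * (7 * n) \<le> nat p * (8 * (n - 2 * k))" using mult_mono[OF h2 h1] by simp
  moreover have "8 * (n * n) < (2 * n + 1) * (7 * n)" using n2 by (simp add: algebra_simps)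
  ultimately have "8 * (n * n) < 8 * (nat p * (n - 2 * k))" by simp
  then have big: "card A * card A < nat p * (card A - 2 * k)" using cA by simp
  define s where "s = card {t\<in>{0..<p}. dd p A t \<le> k}"
  have SB: "2 * s * (n - 2 * k) \<le> n * n + (n - 2 * k)"
    using S_bound[OF p Ap big] cA unfolding s_def by simp
  define cnt where "cnt = (\<Sum>b\<in>A. cc p A ((b - x) mod p))"
  have CB: "cnt \<le> n * (n - (k+1)) + (k+1) * s"
    using count_bound[OF Ap _ kn, of x] pp cA unfolding cnt_def s_def by simp
  have rCB: "real cnt \<le> real n * (real n - (real k + 1)) + (real k + 1) * real s"
  proof -
    have "real cnt \<le> real (n * (n - (k+1)) + (k+1) * s)" using CB by linarith
    also have "\<dots> = real n * real (n - (k+1)) + (real k + 1) * real s" by (simp only: of_nat_add of_nat_mult of_nat_Suc add.commute[of 1] Suc_eq_plus1 of_nat_1)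
    also have "real (n - (k+1)) = real n - (real k + 1)" using kn cA by (simp add: of_nat_diff)
    finally show ?thesis .
  qed
  have rSB: "2 * real s * (real n - 2 * real k) \<le> real n * real n + (real n - 2 * real k)"
  proof -
    have "real (2 * s * (n - 2 * k)) \<le> real (n * n + (n - 2 * k))" using SB by linarith
    moreover have "2 * k \<le> n" using k16 by simp
    ultimately show ?thesis by (simp add: of_nat_diff)
  qed
  have fa: "real cnt \<le> 127 / 128 * (real n * real n)"
    by (rule final_arith[OF rCB rSB]) (use k16 k16b n2 in auto)
  have "pmf (sum3_dist p A) x = real cnt / real n ^ 3"
    using pmf_formula[OF Ap ne x sym] cA unfolding cnt_def by simp
  also have "\<dots> \<le> (127 / 128 * (real n * real n)) / real n ^ 3"
    using fa by (intro divide_right_mono) auto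
  also have "\<dots> = (127 / 128) / real n" using n2 by (simp add: power3_eq_cube)
  finally show ?thesis .
qed

theorem lemma3p1:
  shows "\<exists>C1::real. C1 < 1 \<and>
    (\<forall>(p::int) (n::nat) (A::int set).
       prime p \<longrightarrow> n \<ge> 2 \<longrightarrow> p > 2 * int n \<longrightarrow>
       A \<subseteq> {0..<p} \<longrightarrow> card A = n \<longrightarrow>
       (\<forall>v\<in>A. (- v) mod p \<in> A) \<longrightarrow>
       (\<forall>x\<in>{0..<p}. pmf (sum3_dist p A) x \<le> C1 / real n))"
proof (rule exI[of _ "127/128"], intro conjI allI impI ballI)
  fix p :: int and n :: nat and A :: "int set" and x :: int
  assume "prime p" "n \<ge> 2" "p > 2 * int n" "A \<subseteq> {0..<p}" "card A = n"
    "\<forall>v\<in>A. (- v) mod p \<in> A" "x \<in> {0..<p}"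
  then show "pmf (sum3_dist p A) x \<le> (127/128) / real n" by (rule main)
qed simp

end
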